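(* Let $G=(V,E)$ be a graph, $v,u$ two non-adjacent vertices of $G$, and $k$ an integer. For any $c,q\in[k]$ with $c\ne q$, the sets $S(c,c)$ and $S(q,c)$ (defined in the context) are isomorphic, and the map $H(\cdot,q):S(c,c)\to S(q,c)$ is a bijection.
   Context: $[k]=\{1,\dots,k\}$; $\Omega$ is the set of proper $k$-colourings of $G$, $\sigma_w$ the colour of $w$ under $\sigma$, and $\Omega(c,q)\subseteq\Omega$ the colourings with $\sigma_v=c$ and $\sigma_u=q$. For $\sigma\in\Omega$ and $q\in[k]\setminus\{\sigma_v\}$, the disagreement graph $Q_{\sigma_v,q}$ is the subgraph of $G$ induced by all vertices $x$ such that there is a path $v=w_0,\dots,w_t=x$ in $G$ with $\sigma_{w_j}\in\{\sigma_v,q\}$ for all $j$. The $q$-switching $H(\sigma,q)$ is obtained from $\sigma$ by recolouring with $q$ every vertex of $Q_{\sigma_v,q}$ coloured $\sigma_v$ and recolouring with $\sigma_v$ every vertex of $Q_{\sigma_v,q}$ coloured $q$, all other vertices keeping their colour. $S(c,c)$ is the set of $\sigma\in\Omega(c,c)$ such that $u\notin Q_{\sigma_v,q}$; $S(q,c)$ is the set of $\sigma\in\Omega(q,c)$ such that $u\notin Q_{\sigma_v,c}$. Two sets are isomorphic if there is a bijection between them. *)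

theory Defs
  imports "HOL-Library.FuncSet"
begin

definition graph :: "'a set \<Rightarrow> ('a \<Rightarrow> 'a \<Rightarrow> bool) \<Rightarrow> bool" where
  "graph V E \<longleftrightarrow> finite V \<and> (\<forall>x y. E x y \<longrightarrow> x \<in> V \<and> y \<in> V)
     \<and> (\<forall>x y. E x y \<longrightarrow> E y x) \<and> (\<forall>x. \<not> E x x)"

definition colourings :: "'a set \<Rightarrow> ('a \<Rightarrow> 'a \<Rightarrow> bool) \<Rightarrow> nat \<Rightarrow> ('a \<Rightarrow> nat) set" where
  "colourings V E k = {\<sigma> \<in> V \<rightarrow>\<^sub>E {1..k}. \<forall>x y. E x y \<longrightarrow> \<sigma> x \<noteq> \<sigma> y}"

definition colourings_vu ::
  "'a set \<Rightarrow> ('a \<Rightarrow> 'a \<Rightarrow> bool) \<Rightarrow> nat \<Rightarrow> 'a \<Rightarrow> 'a \<Rightarrow> nat \<Rightarrow> nat \<Rightarrow> ('a \<Rightarrow> nat) set" where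
  "colourings_vu V E k v u c q = {\<sigma> \<in> colourings V E k. \<sigma> v = c \<and> \<sigma> u = q}"

definition is_path :: "'a set \<Rightarrow> ('a \<Rightarrow> 'a \<Rightarrow> bool) \<Rightarrow> 'a list \<Rightarrow> bool" where
  "is_path V E ws \<longleftrightarrow> ws \<noteq> [] \<and> set ws \<subseteq> V \<and>
     (\<forall>i. Suc i < length ws \<longrightarrow> E (ws ! i) (ws ! Suc i))"

text \<open>Vertex set of the disagreement graph Q_{sigma_v,q}.\<close>
definition disagreement :: "'a set \<Rightarrow> ('a \<Rightarrow> 'a \<Rightarrow> bool) \<Rightarrow> 'a \<Rightarrow> ('a \<Rightarrow> nat) \<Rightarrow> nat \<Rightarrow> 'a set" where
  "disagreement V E v \<sigma> q = {x. \<exists>ws. is_path V E ws \<and> hd ws = v \<and> last ws = x \<and>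
       (\<forall>w \<in> set ws. \<sigma> w \<in> {\<sigma> v, q})}"

definition switching :: "'a set \<Rightarrow> ('a \<Rightarrow> 'a \<Rightarrow> bool) \<Rightarrow> 'a \<Rightarrow> ('a \<Rightarrow> nat) \<Rightarrow> nat \<Rightarrow> ('a \<Rightarrow> nat)" where
  "switching V E v \<sigma> q = (\<lambda>w. if w \<in> disagreement V E v \<sigma> q then
       (if \<sigma> w = \<sigma> v then q else if \<sigma> w = q then \<sigma> v else \<sigma> w) else \<sigma> w)"

definition S_cc :: "'a set \<Rightarrow> ('a \<Rightarrow> 'a \<Rightarrow> bool) \<Rightarrow> nat \<Rightarrow> 'a \<Rightarrow> 'a \<Rightarrow> nat \<Rightarrow> nat \<Rightarrow> ('a \<Rightarrow> nat) set" where
  "S_cc V E k v u c q = {\<sigma> \<in> colourings_vu V E k v u c c. u \<notin> disagreement V E v \<sigma> q}"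

definition S_qc :: "'a set \<Rightarrow> ('a \<Rightarrow> 'a \<Rightarrow> bool) \<Rightarrow> nat \<Rightarrow> 'a \<Rightarrow> 'a \<Rightarrow> nat \<Rightarrow> nat \<Rightarrow> ('a \<Rightarrow> nat) set" where
  "S_qc V E k v u q c = {\<sigma> \<in> colourings_vu V E k v u q c. u \<notin> disagreement V E v \<sigma> c}"

end

theory Submission
  imports Defs
begin

lemma diff_Suc_1': "\<lbrakk>E (ws ! (length ws - Suc 0)) y; Suc i = length ws\<rbrakk> \<Longrightarrow> E (ws ! i) y"
  by (metis diff_Suc_Suc minus_nat.diff_0)

lemma v_in_dis: "v \<in> V \<Longrightarrow> v \<in> disagreement V E v \<sigma> b"
  unfolding disagreement_def
  by (rule CollectI, rule exI[of _ "[v]"]) (auto simp: is_path_def)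

lemma dis_sub: "x \<in> disagreement V E v \<sigma> b \<Longrightarrow> x \<in> V \<and> \<sigma> x \<in> {\<sigma> v, b}"
  unfolding disagreement_def is_path_def by auto

lemma dis_ext:
  assumes "x \<in> disagreement V E v \<sigma> b" "E x y" "y \<in> V" "\<sigma> y \<in> {\<sigma> v, b}"
  shows "y \<in> disagreement V E v \<sigma> b"
proof -
  obtain ws where ws: "is_path V E ws" "hd ws = v" "last ws = x" "\<forall>w\<in>set ws. \<sigma> w \<in> {\<sigma> v, b}"
    using assms(1) unfolding disagreement_def by blast
  have "is_path V E (ws @ [y])"
    using ws(1) ws(3) assms(2,3) unfolding is_path_def
    by (auto simp: nth_append last_conv_nth less_Suc_eq)
       (metis diff_Suc_1')
  moreover have "hd (ws @ [y]) = v" using ws by (simp add: is_path_def)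
  moreover have "\<forall>w\<in>set (ws @ [y]). \<sigma> w \<in> {\<sigma> v, b}" using ws(4) assms(4) by auto
  ultimately show ?thesis unfolding disagreement_def by (intro CollectI exI[of _ "ws @ [y]"]) simp
qed

lemma sw_v: "v \<in> V \<Longrightarrow> switching V E v \<sigma> b v = b"
  using v_in_dis[of v V E \<sigma> b] by (simp add: switching_def)

lemma sw_colset:
  assumes "v \<in> V" "\<sigma> v \<noteq> b"
  shows "(switching V E v \<sigma> b w \<in> {b, \<sigma> v}) = (\<sigma> w \<in> {\<sigma> v, b})"
  using assms by (auto simp: switching_def)

lemma sw_dis:
  assumes "v \<in> V" "\<sigma> v \<noteq> b"
  shows "disagreement V E v (switching V E v \<sigma> b) (\<sigma> v) = disagreement V E v \<sigma> b"
proof -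
  have "\<And>w. (switching V E v \<sigma> b w \<in> {switching V E v \<sigma> b v, \<sigma> v}) = (\<sigma> w \<in> {\<sigma> v, b})"
    using sw_colset[where \<sigma>=\<sigma>, OF assms] sw_v[OF assms(1)] by simp
  then show ?thesis unfolding disagreement_def by simp
qed

lemma sw_inv:
  assumes "v \<in> V" "\<sigma> v \<noteq> b"
  shows "switching V E v (switching V E v \<sigma> b) (\<sigma> v) = \<sigma>"
proof
  fix w
  let ?t = "switching V E v \<sigma> b"
  have tv: "?t v = b" using sw_v[OF assms(1)] .
  show "switching V E v ?t (\<sigma> v) w = \<sigma> w"
  proof (cases "w \<in> disagreement V E v \<sigma> b")
    case True
    then show ?thesis using sw_dis[where \<sigma>=\<sigma>, OF assms] tv assms(2)
      unfolding switching_def[of V E v ?t] by (auto simp: switching_def)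
  next
    case False
    then show ?thesis using sw_dis[where \<sigma>=\<sigma>, OF assms]
      unfolding switching_def[of V E v ?t] by (auto simp: switching_def)
  qed
qed

lemma sw_col:
  assumes g: "graph V E" and v: "v \<in> V" and s: "\<sigma> \<in> colourings V E k"
    and b: "b \<in> {1..k}" and ne: "\<sigma> v \<noteq> b"
  shows "switching V E v \<sigma> b \<in> colourings V E k"
proof -
  let ?D = "disagreement V E v \<sigma> b"
  let ?t = "switching V E v \<sigma> b"
  have sv: "\<sigma> v \<in> {1..k}" using s v unfolding colourings_def by auto
  have ext: "\<sigma> \<in> V \<rightarrow>\<^sub>E {1..k}" using s unfolding colourings_def by auto
  have "?t \<in> V \<rightarrow>\<^sub>E {1..k}"
  proof
    fix x assume "x \<in> V" then show "?t x \<in> {1..k}" using ext sv b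
      by (auto simp: switching_def)
  next
    fix x assume "x \<notin> V" then show "?t x = undefined" using ext dis_sub[of x V E v \<sigma> b]
      by (auto simp: switching_def)
  qed
  moreover have "\<forall>x y. E x y \<longrightarrow> ?t x \<noteq> ?t y"
  proof (intro allI impI)
    fix x y assume e: "E x y"
    have xy: "x \<in> V" "y \<in> V" "E y x" using g e unfolding graph_def by auto
    have ne2: "\<sigma> x \<noteq> \<sigma> y" using s e unfolding colourings_def by auto
    show "?t x \<noteq> ?t y"
    proof (cases "x \<in> ?D"; cases "y \<in> ?D")
      assume "x \<in> ?D" "y \<in> ?D" then show ?thesis using ne2 ne by (auto simp: switching_def)
    next
      assume "x \<in> ?D" "y \<notin> ?D"
      then have "\<sigma> y \<notin> {\<sigma> v, b}" using dis_ext[where \<sigma>=\<sigma> and E=E, OF _ e xy(2)] by blast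
      moreover have "\<sigma> x \<in> {\<sigma> v, b}" using dis_sub[OF \<open>x \<in> ?D\<close>] by blast
      ultimately show ?thesis using \<open>x \<in> ?D\<close> \<open>y \<notin> ?D\<close> by (auto simp: switching_def)
    next
      assume "x \<notin> ?D" "y \<in> ?D"
      then have "\<sigma> x \<notin> {\<sigma> v, b}" using dis_ext[where \<sigma>=\<sigma> and E=E, OF _ xy(3) xy(1)] by blast
      moreover have "\<sigma> y \<in> {\<sigma> v, b}" using dis_sub[OF \<open>y \<in> ?D\<close>] by blast
      ultimately show ?thesis using \<open>y \<in> ?D\<close> \<open>x \<notin> ?D\<close> by (auto simp: switching_def)
    next
      assume "x \<notin> ?D" "y \<notin> ?D" then show ?thesis using ne2 by (auto simp: switching_def)
    qed
  qed
  ultimately show ?thesis unfolding colourings_def by auto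
qed

lemma sw_maps:
  assumes g: "graph V E" and v: "v \<in> V" and s: "\<sigma> \<in> colourings V E k"
    and b: "b \<in> {1..k}" and ne: "\<sigma> v \<noteq> b" and u: "u \<notin> disagreement V E v \<sigma> b"
  shows "switching V E v \<sigma> b \<in> colourings V E k \<and> switching V E v \<sigma> b v = b
     \<and> switching V E v \<sigma> b u = \<sigma> u
     \<and> u \<notin> disagreement V E v (switching V E v \<sigma> b) (\<sigma> v)"
  using sw_col[OF assms(1-5)] sw_v[OF v] sw_dis[where \<sigma>=\<sigma>, OF v ne] u by (simp add: switching_def)

theorem lemma2:
  fixes V :: "'a set" and E :: "'a \<Rightarrow> 'a \<Rightarrow> bool" and v u :: 'a and k c q :: nat
  assumes "graph V E"
    and "v \<in> V" and "u \<in> V" and "v \<noteq> u" and "\<not> E v u"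
    and "c \<in> {1..k}" and "q \<in> {1..k}" and "c \<noteq> q"
  shows "(\<exists>f. bij_betw f (S_cc V E k v u c q) (S_qc V E k v u q c))
    \<and> bij_betw (\<lambda>\<sigma>. switching V E v \<sigma> q) (S_cc V E k v u c q) (S_qc V E k v u q c)"
proof -
  have B: "bij_betw (\<lambda>\<sigma>. switching V E v \<sigma> q) (S_cc V E k v u c q) (S_qc V E k v u q c)"
  proof (rule bij_betw_byWitness[where f' = "\<lambda>\<tau>. switching V E v \<tau> c"])
    show "\<forall>a\<in>S_cc V E k v u c q. switching V E v (switching V E v a q) c = a"
      using sw_inv[OF assms(2)] assms(8) by (auto simp: S_cc_def colourings_vu_def)
    show "\<forall>a\<in>S_qc V E k v u q c. switching V E v (switching V E v a c) q = a"
      using sw_inv[OF assms(2)] assms(8) by (auto simp: S_qc_def colourings_vu_def)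
    show "(\<lambda>\<sigma>. switching V E v \<sigma> q) ` S_cc V E k v u c q \<subseteq> S_qc V E k v u q c"
      using sw_maps[OF assms(1,2) _ assms(7)] assms(8)
      by (fastforce simp: S_cc_def S_qc_def colourings_vu_def)
    show "(\<lambda>\<sigma>. switching V E v \<sigma> c) ` S_qc V E k v u q c \<subseteq> S_cc V E k v u c q"
      using sw_maps[OF assms(1,2) _ assms(6)] assms(8)
      by (fastforce simp: S_cc_def S_qc_def colourings_vu_def)
  qed
  then show ?thesis by blast
qed

end
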